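(* Let $\Lambda\geq 0$. Let $F(z)=\bar{z}G(z)+H(z)$, $z\in\mathbb{D}$, where $G$ and $H$ are analytic in $\mathbb{D}$ with $G(0)=0$, $H(0)=0$, $H'(0)=1$, $|G'(z)|\leq\Lambda$ for all $z\in\mathbb{D}$, and either $|H(z)|<1$ for all $z\in\mathbb{D}$ or $|H'(z)|\leq 1$ for all $z\in\mathbb{D}$. Define $\rho_2=1$ if $0\leq\Lambda\leq 1/2$ and $\rho_2=\frac{1}{2\Lambda}$ if $\Lambda>1/2$, and $\sigma_2=\rho_2-\Lambda\rho_2^2$. Then $F$ is univalent in $\mathbb{D}_{\rho_2}$ and $F(\mathbb{D}_{\rho_2})\supseteq\mathbb{D}_{\sigma_2}$. This result is sharp (the constants $\rho_2$ and $\sigma_2$ cannot be replaced by larger ones), as shown by the function $F_2(z)=\Lambda|z|^2+z$.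
   Context: $\mathbb{D}=\{z:|z|<1\}$ and $\mathbb{D}_r=\{z\in\mathbb{C}:|z|<r\}$. *)

theory Defs
  imports "HOL-Analysis.Analysis"
begin

definition rho2 :: "real \<Rightarrow> real" where
  "rho2 \<Lambda> = (if \<Lambda> \<le> 1/2 then 1 else 1 / (2 * \<Lambda>))"

definition sigma2 :: "real \<Rightarrow> real" where
  "sigma2 \<Lambda> = rho2 \<Lambda> - \<Lambda> * (rho2 \<Lambda>)^2"

definition F2 :: "real \<Rightarrow> complex \<Rightarrow> complex" where
  "F2 \<Lambda> z = complex_of_real (\<Lambda> * (cmod z)^2) + z"

end

theory Submission
  imports Defs "HOL-Complex_Analysis.Complex_Analysis"
begin

lemma H_id:
  fixes H :: "complex \<Rightarrow> complex"
  assumes hol: "H holomorphic_on ball 0 1" and h0: "H 0 = 0" and d0: "deriv H 0 = 1"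
    and alt: "(\<forall>z\<in>ball 0 1. cmod (H z) < 1) \<or> (\<forall>z\<in>ball 0 1. cmod (deriv H z) \<le> 1)"
  shows "\<forall>z\<in>ball 0 1. H z = z"
  using alt
proof
  assume a: "\<forall>z\<in>ball 0 1. cmod (H z) < 1"
  have "\<exists>\<alpha>. (\<forall>z. norm z < 1 \<longrightarrow> H z = \<alpha> * z) \<and> norm \<alpha> = 1"
    by (rule Schwarz_Lemma(3)[OF hol h0, of 0]) (use a d0 in auto)
  then obtain \<alpha> where al: "\<And>z. norm z < 1 \<Longrightarrow> H z = \<alpha> * z" by blast
  have "(H has_field_derivative \<alpha>) (at 0)"
  proof (rule has_field_derivative_transform_within_open[of "\<lambda>z. \<alpha> * z" _ _ "ball 0 1"])
    show "((*) \<alpha> has_field_derivative \<alpha>) (at 0)" by (auto intro!: derivative_eq_intros)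
  qed (use al in auto)
  then have "\<alpha> = 1" using d0 DERIV_imp_deriv by fastforce
  then show ?thesis using al by auto
next
  assume a: "\<forall>z\<in>ball 0 1. cmod (deriv H z) \<le> 1"
  have "deriv H constant_on ball 0 1"
    by (rule maximum_modulus_principle[of _ _ "ball 0 1" 0])
       (use a d0 hol in \<open>auto intro: holomorphic_deriv\<close>)
  then have dc: "\<And>z. z \<in> ball 0 1 \<Longrightarrow> deriv H z = 1"
    using d0 unfolding constant_on_def by (metis centre_in_ball zero_less_one)
  have "\<exists>c. \<forall>x\<in>ball 0 1. (\<lambda>z. H z - z) x = c"
  proof (rule has_field_derivative_zero_constant)
    fix x :: complex assume x: "x \<in> ball 0 1"
    have "(H has_field_derivative deriv H x) (at x)"
      using hol x by (meson holomorphic_derivI open_ball)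
    then have "((\<lambda>z. H z - z) has_field_derivative 1 - 1) (at x)"
      using dc[OF x] by (auto intro!: derivative_eq_intros)
    then show "((\<lambda>z. H z - z) has_field_derivative 0) (at x within ball 0 1)"
      by (simp add: has_field_derivative_at_within)
  qed auto
  then obtain c where c: "\<forall>x\<in>ball 0 1. H x - x = c" by auto
  then have "c = 0" using h0 by force
  then show ?thesis using c by auto
qed

lemma G_lip:
  fixes G :: "complex \<Rightarrow> complex"
  assumes hol: "G holomorphic_on ball 0 1" and b: "\<forall>z\<in>ball 0 1. cmod (deriv G z) \<le> L"
    and x: "x \<in> ball 0 1" and y: "y \<in> ball 0 1"
  shows "cmod (G x - G y) \<le> L * cmod (x - y)"
proof (rule field_differentiable_bound[OF convex_ball _ _ x y])
  fix z :: complex assume z: "z \<in> ball 0 1"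
  show "(G has_field_derivative deriv G z) (at z within ball 0 1)"
    using hol z by (meson holomorphic_derivI open_ball)
  show "cmod (deriv G z) \<le> L" using b z by auto
qed


lemma rho_facts:
  assumes "L \<ge> 0"
  shows "0 < rho2 L" "rho2 L \<le> 1" "2 * L * rho2 L \<le> 1" "0 \<le> sigma2 L"
proof -
  show a: "0 < rho2 L" "rho2 L \<le> 1" using assms by (auto simp: rho2_def)
  show b: "2 * L * rho2 L \<le> 1" using assms by (auto simp: rho2_def)
  have "sigma2 L = rho2 L * (1 - L * rho2 L)" by (simp add: sigma2_def power2_eq_square algebra_simps)
  moreover have "1 - L * rho2 L \<ge> 0" using b by linarith
  ultimately show "0 \<le> sigma2 L" using a by simp
qed

lemma key_est:
  fixes G :: "complex \<Rightarrow> complex"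
  assumes L: "L \<ge> 0" and lip: "\<And>x y. x \<in> ball 0 1 \<Longrightarrow> y \<in> ball 0 1 \<Longrightarrow> cmod (G x - G y) \<le> L * cmod (x - y)"
    and g0: "G 0 = 0" and x: "x \<in> ball 0 1" and y: "y \<in> ball 0 1"
  shows "cmod (cnj x * G x - cnj y * G y) \<le> L * (cmod x + cmod y) * cmod (x - y)"
proof -
  have e: "cnj x * G x - cnj y * G y = cnj x * (G x - G y) + cnj (x - y) * G y"
    by (simp add: algebra_simps)
  have gy: "cmod (G y) \<le> L * cmod y" using lip[OF y, of 0] g0 by simp
  have "cmod (cnj x * (G x - G y)) \<le> cmod x * (L * cmod (x - y))"
    by (simp add: norm_mult mult_left_mono lip[OF x y])
  moreover have "cmod (cnj (x - y) * G y) \<le> cmod (x - y) * (L * cmod y)"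
    by (simp only: norm_mult complex_mod_cnj) (rule mult_left_mono[OF gy], simp)
  ultimately have "cmod (cnj x * G x - cnj y * G y) \<le> cmod x * (L * cmod (x - y)) + cmod (x - y) * (L * cmod y)"
    unfolding e by (meson add_mono norm_triangle_ineq order_trans)
  also have "\<dots> = L * (cmod x + cmod y) * cmod (x - y)" by (simp add: algebra_simps)
  finally show ?thesis .
qed

lemma part_inj:
  fixes G F :: "complex \<Rightarrow> complex"
  assumes L: "L \<ge> 0" and lip: "\<And>x y. x \<in> ball 0 1 \<Longrightarrow> y \<in> ball 0 1 \<Longrightarrow> cmod (G x - G y) \<le> L * cmod (x - y)"
    and g0: "G 0 = 0" and F: "\<forall>z\<in>ball 0 1. F z = cnj z * G z + z"
  shows "inj_on F (ball 0 (rho2 L))"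
proof (rule inj_onI, rule ccontr)
  fix x y assume x: "x \<in> ball 0 (rho2 L)" and y: "y \<in> ball 0 (rho2 L)" and eq: "F x = F y" and ne: "x \<noteq> y"
  note rf = rho_facts[OF L]
  have x1: "x \<in> ball 0 1" and y1: "y \<in> ball 0 1" using x y rf by auto
  have "x - y = -(cnj x * G x - cnj y * G y)" using eq F x1 y1 by (simp add: algebra_simps)
  then have "cmod (x - y) \<le> L * (cmod x + cmod y) * cmod (x - y)"
    using key_est[OF L lip g0 x1 y1] by (metis norm_minus_cancel)
  moreover have "L * (cmod x + cmod y) < 1"
  proof (cases "L = 0")
    case False
    then have "L * (cmod x + cmod y) < L * (2 * rho2 L)" using x y L by (auto intro!: mult_strict_left_mono)
    then show ?thesis using rf by linarith
  qed simp
  moreover have "cmod (x - y) > 0" using ne by simp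
  ultimately have "L * (cmod x + cmod y) * cmod (x - y) < 1 * cmod (x - y)"
    by (intro mult_strict_right_mono) auto
  with \<open>cmod (x - y) \<le> L * (cmod x + cmod y) * cmod (x - y)\<close> show False by simp
qed

lemma part_onto:
  fixes G F :: "complex \<Rightarrow> complex"
  assumes L: "L \<ge> 0" and lip: "\<And>x y. x \<in> ball 0 1 \<Longrightarrow> y \<in> ball 0 1 \<Longrightarrow> cmod (G x - G y) \<le> L * cmod (x - y)"
    and g0: "G 0 = 0" and F: "\<forall>z\<in>ball 0 1. F z = cnj z * G z + z"
  shows "ball 0 (sigma2 L) \<subseteq> F ` ball 0 (rho2 L)"
proof
  fix w :: complex assume w: "w \<in> ball 0 (sigma2 L)"
  note rf = rho_facts[OF L]
  define \<rho> where "\<rho> = rho2 L"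
  define \<sigma> where "\<sigma> = sigma2 L"
  have sig: "\<sigma> = \<rho> - L * \<rho>^2" by (simp add: \<sigma>_def \<rho>_def sigma2_def)
  have wl: "cmod w < \<sigma>" using w by (simp add: \<sigma>_def)
  define \<delta> where "\<delta> = min 1 (min \<rho> ((\<sigma> - cmod w) / (1 + L)))"
  have d0: "\<delta> > 0" using wl rf L by (auto simp: \<delta>_def \<rho>_def)
  have d2: "\<delta> \<le> (\<sigma> - cmod w) / (1 + L)" by (simp add: \<delta>_def)
  have d1: "\<delta> \<le> 1" "\<delta> \<le> \<rho>" "\<delta> * (1 + L) \<le> \<sigma> - cmod w"
    using L d2 by (auto simp: \<delta>_def pos_le_divide_eq)
  define r where "r = \<rho> - \<delta>"
  have r0: "0 \<le> r" "r < \<rho>" using d0 d1 by (auto simp: r_def)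
  have "r - L * r^2 = \<sigma> - \<delta> * (1 - 2 * L * \<rho>) - L * \<delta>^2"
    by (simp add: r_def sig power2_eq_square algebra_simps)
  moreover have "\<delta> * (1 - 2 * L * \<rho>) \<le> \<delta>" using d0 L rf by (simp add: \<rho>_def mult_nonneg_nonneg)
  moreover have "L * \<delta>^2 \<le> L * \<delta>" using d0 d1 L by (simp add: power2_eq_square mult_left_mono)
  moreover have "\<delta> * (1 + L) = \<delta> + L * \<delta>" by (simp add: algebra_simps)
  ultimately have rw: "cmod w \<le> r - L * r^2" using d1 by linarith
  define T where "T z = w - cnj z * G z" for z
  have sub: "cball (0::complex) r \<subseteq> ball 0 1" using r0 rf by (auto simp: \<rho>_def)
  have "\<exists>!z\<in>cball 0 r. T z = z"
  proof (rule Banach_fix[where c = "2 * L * r"])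
    show "complete (cball (0::complex) r)" by (simp add: complete_eq_closed)
    show "cball (0::complex) r \<noteq> {}" using r0 by auto
    show "0 \<le> 2 * L * r" using L r0 by simp
    have "2 * L * r \<le> 2 * L * \<rho>" using L r0 by (simp add: mult_left_mono)
    show "2 * L * r < 1"
    proof (cases "L = 0")
      case False
      then have "2 * L * r < 2 * L * \<rho>" using L r0 by (intro mult_strict_left_mono) auto
      then show ?thesis using rf by (simp add: \<rho>_def)
    qed simp
    show "T ` cball 0 r \<subseteq> cball 0 r"
    proof
      fix y assume "y \<in> T ` cball 0 r"
      then obtain z where z: "z \<in> cball 0 r" and y: "y = T z" by auto
      have z1: "z \<in> ball 0 1" using z sub by auto
      have "cmod (G z) \<le> L * cmod z" using lip[OF z1, of 0] g0 by simp
      also have "\<dots> \<le> L * r" using z L by (simp add: mult_left_mono)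
      finally have gz: "cmod (G z) \<le> L * r" .
      have "cmod (cnj z * G z) \<le> r * (L * r)" unfolding norm_mult complex_mod_cnj
        using z gz r0 by (intro mult_mono) auto
      moreover have "r * (L * r) = L * r^2" by (simp add: power2_eq_square)
      moreover have "cmod (w - cnj z * G z) \<le> cmod w + cmod (cnj z * G z)" by (rule norm_triangle_ineq4)
      ultimately have "cmod y \<le> cmod w + L * r^2" unfolding y T_def by linarith
      then show "y \<in> cball 0 r" using rw by simp
    qed
    fix x y :: complex assume x: "x \<in> cball 0 r" and y: "y \<in> cball 0 r"
    have x1: "x \<in> ball 0 1" and y1: "y \<in> ball 0 1" using x y sub by auto
    have "dist (T x) (T y) = cmod (cnj x * G x - cnj y * G y)"
      by (simp add: T_def dist_norm norm_minus_commute)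
    also have "\<dots> \<le> L * (cmod x + cmod y) * cmod (x - y)" by (rule key_est[OF L lip g0 x1 y1])
    also have "\<dots> \<le> (2 * L * r) * cmod (x - y)"
    proof (intro mult_right_mono)
      have "L * (cmod x + cmod y) \<le> L * (2 * r)" using x y L by (intro mult_left_mono) auto
      then show "L * (cmod x + cmod y) \<le> 2 * L * r" by simp
    qed simp
    finally show "dist (T x) (T y) \<le> 2 * L * r * dist x y" by (simp add: dist_norm)
  qed
  then obtain z where z: "z \<in> cball 0 r" "T z = z" by auto
  have "F z = w" using z sub F by (auto simp: T_def algebra_simps)
  moreover have "z \<in> ball 0 (rho2 L)" using z r0 by (auto simp: \<rho>_def)
  ultimately show "w \<in> F ` ball 0 (rho2 L)" by auto
qed

lemma F2_real: "F2 L (complex_of_real x) = complex_of_real (L * x^2 + x)"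
  by (simp add: F2_def)

lemma part_sharp1:
  assumes L: "L \<ge> 0" and r: "rho2 L < r" "r \<le> 1"
  shows "\<not> inj_on (F2 L) (ball 0 r)"
proof
  assume inj: "inj_on (F2 L) (ball 0 r)"
  have LL: "L > 1/2" and rh: "rho2 L = 1 / (2 * L)" using r by (auto simp: rho2_def split: if_splits)
  define e where "e = (r - rho2 L) / 2"
  have e0: "e > 0" using r by (simp add: e_def)
  define a where "a = - (rho2 L - e)"
  define b where "b = - (rho2 L + e)"
  have "F2 L (of_real a) = F2 L (of_real b)"
  proof -
    have "2 * L * rho2 L = 1" using rh LL by simp
    then have "L * a^2 + a = L * b^2 + b"
      by (simp add: a_def b_def power2_eq_square algebra_simps)
    then show ?thesis by (simp add: F2_real)
  qed
  moreover have "\<bar>a\<bar> < r" "\<bar>b\<bar> < r"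
    using e0 r rho_facts[OF L] unfolding a_def b_def e_def by (auto simp: abs_if field_simps)
  then have "of_real a \<in> ball (0::complex) r" "of_real b \<in> ball (0::complex) r" by auto
  moreover have "a \<noteq> b" using e0 by (simp add: a_def b_def)
  ultimately show False using inj by (metis inj_onD of_real_eq_iff)
qed

lemma part_sharp2:
  assumes L: "L \<ge> 0" and s: "sigma2 L < s"
  shows "\<not> ball 0 s \<subseteq> F2 L ` ball 0 (rho2 L)"
proof
  assume sub: "ball 0 s \<subseteq> F2 L ` ball 0 (rho2 L)"
  note rf = rho_facts[OF L]
  define t where "t = (sigma2 L + s) / 2"
  have t: "sigma2 L < t" "t < s" "0 < t" using s rf by (auto simp: t_def)
  have "- complex_of_real t \<in> ball 0 s" using t by simp
  then have "- complex_of_real t \<in> F2 L ` ball 0 (rho2 L)" by (rule subsetD[OF sub])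
  then obtain z where z: "z \<in> ball 0 (rho2 L)" and fz: "F2 L z = - of_real t" by (rule imageE) (rule that, auto)
  have "Im z = 0" using arg_cong[OF fz, of Im] by (simp add: F2_def)
  then have zx: "z = of_real (Re z)" by (simp add: complex_eq_iff)
  define x where "x = Re z"
  have cz: "cmod z = \<bar>x\<bar>" by (simp add: x_def cmod_def \<open>Im z = 0\<close>)
  have xr: "\<bar>x\<bar> < rho2 L" using z cz by simp
  have "Re (F2 L z) = - t" using fz by simp
  then have "L * (cmod z)^2 + x = - t" by (simp add: F2_def x_def)
  then have eq: "L * x^2 + x = - t" using cz by simp
  have "L * x^2 + x + sigma2 L \<ge> 0"
  proof (cases "L \<le> 1/2")
    case True
    then have "rho2 L = 1" "sigma2 L = 1 - L" by (auto simp: rho2_def sigma2_def)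
    moreover have "L * x^2 + x + (1 - L) = (1 + x) * (1 - L + L * x)" by (simp add: power2_eq_square algebra_simps)
    moreover have "1 + x \<ge> 0" using xr calculation by auto
    moreover have "1 - L + L * x \<ge> 0"
    proof -
      have "x \<ge> -1" using xr calculation by auto
      then have "L * (-1) \<le> L * x" using L by (intro mult_left_mono) auto
      then have "L * x \<ge> - L" by simp
      then show ?thesis using True by linarith
    qed
    ultimately show ?thesis by simp
  next
    case False
    then have "rho2 L = 1 / (2 * L)" "sigma2 L = 1 / (4 * L)" by (auto simp: rho2_def sigma2_def power2_eq_square field_simps)
    moreover have "L * x^2 + x + 1 / (4 * L) = L * (x + 1 / (2 * L))^2" using False
      by (simp add: power2_eq_square field_simps)
    ultimately show ?thesis using L by simp
  qed
  then show False using eq t by linarith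
qed

theorem theorem2p2:
  fixes \<Lambda> :: real and F G H :: "complex \<Rightarrow> complex"
  assumes "\<Lambda> \<ge> 0"
    and "G holomorphic_on ball 0 1" and "H holomorphic_on ball 0 1"
    and "\<forall>z\<in>ball 0 1. F z = cnj z * G z + H z"
    and "G 0 = 0" and "H 0 = 0" and "deriv H 0 = 1"
    and "\<forall>z\<in>ball 0 1. cmod (deriv G z) \<le> \<Lambda>"
    and "(\<forall>z\<in>ball 0 1. cmod (H z) < 1) \<or> (\<forall>z\<in>ball 0 1. cmod (deriv H z) \<le> 1)"
  shows "inj_on F (ball 0 (rho2 \<Lambda>))
    \<and> ball 0 (sigma2 \<Lambda>) \<subseteq> F ` ball 0 (rho2 \<Lambda>)
    \<and> (\<forall>r. rho2 \<Lambda> < r \<and> r \<le> 1 \<longrightarrow> \<not> inj_on (F2 \<Lambda>) (ball 0 r))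
    \<and> (\<forall>s. sigma2 \<Lambda> < s \<longrightarrow> \<not> ball 0 s \<subseteq> F2 \<Lambda> ` ball 0 (rho2 \<Lambda>))"
proof -
  have Hz: "\<forall>z\<in>ball 0 1. H z = z" by (rule H_id) (use assms in auto)
  have F': "\<forall>z\<in>ball 0 1. F z = cnj z * G z + z" using assms(4) Hz by auto
  have lip: "\<And>x y. x \<in> ball 0 1 \<Longrightarrow> y \<in> ball 0 1 \<Longrightarrow> cmod (G x - G y) \<le> \<Lambda> * cmod (x - y)"
    by (rule G_lip[OF assms(2) assms(8)])
  show ?thesis
    using part_inj[OF assms(1) lip assms(5) F'] part_onto[OF assms(1) lip assms(5) F']
      part_sharp1[OF assms(1)] part_sharp2[OF assms(1)] by blast
qed

end
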